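(* For every integer $n\ge 3$, \[ R_n(x)=R(\Gamma_{n-1},x)+x^3R(\Gamma_{n-3},x). \]
   Context: For $n\ge1$ let $\Xi_n$ (the $L$-fence) be the poset on $\{x_1,\dots,x_n\}$ whose cover relations are exactly: $x_2\prec x_1$, $x_3\prec x_2$, and for $3\le i\le n-1$, $x_i\prec x_{i+1}$ if $i$ is odd and $x_{i+1}\prec x_i$ if $i$ is even (so $x_1>x_2>x_3<x_4>x_5<x_6>\cdots$, keeping only the relations among elements that exist). A filter of a poset $P$ is a subset $F$ such that $x\in F$, $x\le y$ imply $y\in F$. $\Omega_n$ (the $n$-th matchable Lucas distributive lattice) is the set of filters of $\Xi_n$ ordered by reverse inclusion; $\Omega_0$ is the one-element lattice. The rank of a filter $F\in\Omega_n$ is $n-|F|$, and the rank generating function is $R_n(x)=\sum_{F\in\Omega_n}x^{\,n-|F|}$ (so $R_0(x)=1$). For $m\ge1$ let $Z_m$ be the fence on $\{z_1,\dots,z_m\}$ with cover relations $z_{i+1}\prec z_i$ for odd $i$ and $z_i\prec z_{i+1}$ for even $i$ ($1\le i\le m-1$), i.e. $z_1>z_2<z_3>z_4<\cdots$; $\Gamma_m$ (the Fibonacci cube/lattice) is the lattice of filters of $Z_m$ under reverse inclusion, with $R(\Gamma_m,x)=\sum_{F}x^{\,m-|F|}$ summing over filters $F$ of $Z_m$, and $R(\Gamma_0,x)=1$. *)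

theory Defs
  imports "HOL-Computational_Algebra.Polynomial"
begin

text \<open>Elements x_1..x_n (resp. z_1..z_m) are represented by indices 1..n.
  A pair (a,b) in a cover relation means element a is covered by element b (a < b).\<close>

definition Xi_cover :: "nat \<Rightarrow> (nat \<times> nat) set" where
  "Xi_cover n =
     {(a,b). n \<ge> 2 \<and> a = 2 \<and> b = 1}
   \<union> {(a,b). n \<ge> 3 \<and> a = 3 \<and> b = 2}
   \<union> {(a,b). \<exists>i. 3 \<le> i \<and> i \<le> n - 1 \<and> i + 1 \<le> n \<and>
        ((odd i \<and> a = i \<and> b = i + 1) \<or> (even i \<and> a = i + 1 \<and> b = i))}"

definition Z_cover :: "nat \<Rightarrow> (nat \<times> nat) set" where
  "Z_cover m =
     {(a,b). \<exists>i. 1 \<le> i \<and> i + 1 \<le> m \<and>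
        ((odd i \<and> a = i + 1 \<and> b = i) \<or> (even i \<and> a = i \<and> b = i + 1))}"

definition filters :: "nat \<Rightarrow> (nat \<times> nat) set \<Rightarrow> nat set set" where
  "filters n C = {F. F \<subseteq> {1..n} \<and> (\<forall>x y. x \<in> F \<longrightarrow> (x, y) \<in> C\<^sup>* \<longrightarrow> y \<in> F)}"

definition rank_gen :: "nat \<Rightarrow> (nat \<times> nat) set \<Rightarrow> int poly" where
  "rank_gen n C = (\<Sum>F\<in>filters n C. monom 1 (n - card F))"

definition R_Omega :: "nat \<Rightarrow> int poly" where
  "R_Omega n = rank_gen n (Xi_cover n)"

definition R_Gamma :: "nat \<Rightarrow> int poly" where
  "R_Gamma m = rank_gen m (Z_cover m)"

end

theory Submission imports Defs begin

definition cl :: "(nat \<times> nat) set \<Rightarrow> nat set \<Rightarrow> bool" where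
  "cl C F = (\<forall>x y. x \<in> F \<longrightarrow> (x, y) \<in> C \<longrightarrow> y \<in> F)"

lemma filters_cl: "filters n C = {F. F \<subseteq> {1..n} \<and> cl C F}"
proof -
  have "(\<forall>x y. x \<in> F \<longrightarrow> (x, y) \<in> C\<^sup>* \<longrightarrow> y \<in> F) \<longleftrightarrow> cl C F" for F
  proof
    assume "\<forall>x y. x \<in> F \<longrightarrow> (x, y) \<in> C\<^sup>* \<longrightarrow> y \<in> F"
    then show "cl C F" unfolding cl_def by blast
  next
    assume c: "cl C F"
    show "\<forall>x y. x \<in> F \<longrightarrow> (x, y) \<in> C\<^sup>* \<longrightarrow> y \<in> F"
    proof (intro allI impI)
      fix x y assume "x \<in> F" "(x, y) \<in> C\<^sup>*"
      from this(2,1) show "y \<in> F"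
        by (induction rule: rtrancl_induct) (use c in \<open>auto simp: cl_def\<close>)
    qed
  qed
  then show ?thesis unfolding filters_def by blast
qed

lemma finite_filters: "finite (filters n C)"
  unfolding filters_cl by (rule finite_subset[of _ "Pow {1..n}"]) auto

lemma cl_Xi: "cl (Xi_cover n) F \<longleftrightarrow>
  (2 \<le> n \<longrightarrow> 2 \<in> F \<longrightarrow> 1 \<in> F) \<and> (3 \<le> n \<longrightarrow> 3 \<in> F \<longrightarrow> 2 \<in> F) \<and>
  (\<forall>i. 3 \<le> i \<and> i \<le> n - 1 \<and> i + 1 \<le> n \<and> odd i \<longrightarrow> i \<in> F \<longrightarrow> i + 1 \<in> F) \<and>
  (\<forall>i. 3 \<le> i \<and> i \<le> n - 1 \<and> i + 1 \<le> n \<and> even i \<longrightarrow> i + 1 \<in> F \<longrightarrow> i \<in> F)"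
  unfolding cl_def Xi_cover_def by blast

lemma cl_Z: "cl (Z_cover m) F \<longleftrightarrow>
  (\<forall>i. 1 \<le> i \<and> i + 1 \<le> m \<and> odd i \<longrightarrow> i + 1 \<in> F \<longrightarrow> i \<in> F) \<and>
  (\<forall>i. 1 \<le> i \<and> i + 1 \<le> m \<and> even i \<longrightarrow> i \<in> F \<longrightarrow> i + 1 \<in> F)"
  unfolding cl_def Z_cover_def by blast

lemma mem_shift: "(y::nat) \<in> (+) k ` G \<longleftrightarrow> k \<le> y \<and> y - k \<in> G"
  by (auto simp: image_iff) (metis le_add_diff_inverse)

lemma mem_unshift: "F \<subseteq> {(k::nat)<..} \<Longrightarrow> x \<in> (\<lambda>y. y - k) ` F \<longleftrightarrow> x + k \<in> F"
proof
  assume "F \<subseteq> {k<..}" "x \<in> (\<lambda>y. y - k) ` F"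
  then obtain y where "y \<in> F" "x = y - k" "y > k" by auto
  then have "x + k = y" by simp
  with \<open>y \<in> F\<close> show "x + k \<in> F" by simp
next
  assume "x + k \<in> F" then show "x \<in> (\<lambda>y. y - k) ` F" by (force intro: image_eqI[of _ _ "x + k"])
qed

lemma card_shift: "card ((+) (k::nat) ` G) = card G"
  by (rule card_image) (auto simp: inj_on_def)

lemma card_filter: "F \<in> filters n C \<Longrightarrow> card F \<le> n"
  unfolding filters_cl using card_mono[of "{1..n}" F] by auto

lemma XiE_odd: "cl (Xi_cover n) F \<Longrightarrow> 3 \<le> i \<Longrightarrow> i + 1 \<le> n \<Longrightarrow> odd i \<Longrightarrow> i \<in> F \<Longrightarrow> i + 1 \<in> F"
  unfolding cl_Xi by simp
lemma XiE_even: "cl (Xi_cover n) F \<Longrightarrow> 3 \<le> i \<Longrightarrow> i + 1 \<le> n \<Longrightarrow> even i \<Longrightarrow> i + 1 \<in> F \<Longrightarrow> i \<in> F"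
  unfolding cl_Xi by simp
lemma XiE_2: "cl (Xi_cover n) F \<Longrightarrow> 2 \<le> n \<Longrightarrow> 2 \<in> F \<Longrightarrow> 1 \<in> F"
  unfolding cl_Xi by simp
lemma XiE_3: "cl (Xi_cover n) F \<Longrightarrow> 3 \<le> n \<Longrightarrow> 3 \<in> F \<Longrightarrow> 2 \<in> F"
  unfolding cl_Xi by simp
lemma XiI: "(2 \<in> F \<Longrightarrow> 1 \<in> F) \<Longrightarrow> (3 \<le> n \<Longrightarrow> 3 \<in> F \<Longrightarrow> 2 \<in> F) \<Longrightarrow>
  (\<And>i. 3 \<le> i \<Longrightarrow> i + 1 \<le> n \<Longrightarrow> odd i \<Longrightarrow> i \<in> F \<Longrightarrow> i + 1 \<in> F) \<Longrightarrow>
  (\<And>i. 3 \<le> i \<Longrightarrow> i + 1 \<le> n \<Longrightarrow> even i \<Longrightarrow> i + 1 \<in> F \<Longrightarrow> i \<in> F) \<Longrightarrow> cl (Xi_cover n) F"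
  unfolding cl_Xi by blast
lemma ZE_odd: "cl (Z_cover m) F \<Longrightarrow> 1 \<le> i \<Longrightarrow> i + 1 \<le> m \<Longrightarrow> odd i \<Longrightarrow> i + 1 \<in> F \<Longrightarrow> i \<in> F"
  unfolding cl_Z by simp
lemma ZE_even: "cl (Z_cover m) F \<Longrightarrow> 1 \<le> i \<Longrightarrow> i + 1 \<le> m \<Longrightarrow> even i \<Longrightarrow> i \<in> F \<Longrightarrow> i + 1 \<in> F"
  unfolding cl_Z by simp
lemma ZI: "(\<And>i. 1 \<le> i \<Longrightarrow> i + 1 \<le> m \<Longrightarrow> odd i \<Longrightarrow> i + 1 \<in> F \<Longrightarrow> i \<in> F) \<Longrightarrow>
  (\<And>i. 1 \<le> i \<Longrightarrow> i + 1 \<le> m \<Longrightarrow> even i \<Longrightarrow> i \<in> F \<Longrightarrow> i + 1 \<in> F) \<Longrightarrow> cl (Z_cover m) F"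
  unfolding cl_Z by blast


lemma partA:
  assumes n: "n \<ge> 3"
  shows "(\<Sum>F\<in>{F\<in>filters n (Xi_cover n). 1 \<notin> F}. monom (1::int) (n - card F))
       = monom 1 3 * R_Gamma (n - 3)"
proof -
  let ?T = "filters (n - 3) (Z_cover (n - 3))"
  have "(\<Sum>G\<in>?T. monom (1::int) 3 * monom 1 (n - 3 - card G))
      = (\<Sum>F\<in>{F\<in>filters n (Xi_cover n). 1 \<notin> F}. monom (1::int) (n - card F))"
  proof (rule sum.reindex_bij_witness[where j = "\<lambda>G. (+) 3 ` G" and i = "\<lambda>F. (\<lambda>y. y - 3) ` F"])
    fix F assume F: "F \<in> {F\<in>filters n (Xi_cover n). 1 \<notin> F}"
    then have sub: "F \<subseteq> {1..n}" and c: "cl (Xi_cover n) F" and "1 \<notin> F"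
      by (auto simp: filters_cl)
    with n have "2 \<notin> F" using XiE_2 by fastforce
    with n c have "3 \<notin> F" using XiE_3 by fastforce
    have sub3: "F \<subseteq> {3<..}"
    proof
      fix x assume "x \<in> F"
      with sub have "x \<ge> 1" by auto
      moreover have "x \<noteq> 1" "x \<noteq> 2" "x \<noteq> 3" using \<open>x \<in> F\<close> \<open>1 \<notin> F\<close> \<open>2 \<notin> F\<close> \<open>3 \<notin> F\<close> by auto
      ultimately show "x \<in> {3<..}" by auto
    qed
    show "(+) 3 ` (\<lambda>y. y - 3) ` F = F"
    proof (rule set_eqI)
      fix x show "x \<in> (+) 3 ` (\<lambda>y. y - 3) ` F \<longleftrightarrow> x \<in> F"
        unfolding mem_shift mem_unshift[OF sub3] using sub3 by auto
    qed
    show "(\<lambda>y. y - 3) ` F \<in> ?T"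
      unfolding filters_cl mem_Collect_eq
    proof
      show "(\<lambda>y. y - 3) ` F \<subseteq> {1..n - 3}"
      proof
        fix x assume "x \<in> (\<lambda>y. y - 3) ` F"
        then obtain y where "y \<in> F" "x = y - 3" by auto
        with sub sub3 have "y > 3" "y \<le> n" by auto
        with \<open>x = y - 3\<close> show "x \<in> {1..n - 3}" by auto
      qed
      show "cl (Z_cover (n - 3)) ((\<lambda>y. y - 3) ` F)"
      proof (rule ZI, unfold mem_unshift[OF sub3])
        fix i assume i: "1 \<le> i" "i + 1 \<le> n - 3" "odd i" "i + 1 + 3 \<in> F"
        show "i + 3 \<in> F"
          by (rule XiE_even[OF c, of "i + 3"]) (use i in auto)
      next
        fix i assume i: "1 \<le> i" "i + 1 \<le> n - 3" "even i" "i + 3 \<in> F"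
        show "i + 1 + 3 \<in> F"
          using XiE_odd[OF c, of "i + 3"] i by auto
      qed
    qed
  next
    fix G assume G: "G \<in> ?T"
    then have sub: "G \<subseteq> {1..n-3}" and c: "cl (Z_cover (n-3)) G" by (auto simp: filters_cl)
    show "(\<lambda>y. y - 3) ` (+) 3 ` G = G" by (auto simp: image_image)
    show "(+) 3 ` G \<in> {F\<in>filters n (Xi_cover n). 1 \<notin> F}"
      unfolding filters_cl mem_Collect_eq
    proof (intro conjI)
      show "(+) 3 ` G \<subseteq> {1..n}" using sub n by (force simp: subset_iff)
      show "1 \<notin> (+) 3 ` G" by auto
      show "cl (Xi_cover n) ((+) 3 ` G)"
      proof (rule XiI, unfold mem_shift)
        fix i assume i: "3 \<le> i" "i + 1 \<le> n" "odd i" "3 \<le> i \<and> i - 3 \<in> G"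
        then have "i - 3 \<ge> 1" using sub by auto
        moreover have "Suc (i - 3) = i - 2" "i + 1 - 3 = i - 2" using i by auto
        ultimately show "3 \<le> i + 1 \<and> i + 1 - 3 \<in> G"
          using ZE_even[OF c, of "i - 3"] i by auto
      next
        fix i assume i: "3 \<le> i" "i + 1 \<le> n" "even i" "3 \<le> i + 1 \<and> i + 1 - 3 \<in> G"
        have "i \<noteq> 3" using i by auto
        then have "i - 3 \<ge> 1" using i by auto
        moreover have "Suc (i - 3) = i - 2" "i + 1 - 3 = i - 2" using i by auto
        ultimately show "3 \<le> i \<and> i - 3 \<in> G"
          using ZE_odd[OF c, of "i - 3"] i by auto
      qed (use sub in auto)
    qed
    have "card G \<le> n - 3" using card_filter[OF G] .
    then show "monom 1 (n - card ((+) 3 ` G)) = monom (1::int) 3 * monom 1 (n - 3 - card G)"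
      using n by (simp add: card_shift mult_monom)
  qed
  then show ?thesis
    by (simp add: R_Gamma_def rank_gen_def sum_distrib_left)
qed


lemma partB:
  assumes n: "n \<ge> 3"
  shows "(\<Sum>F\<in>{F\<in>filters n (Xi_cover n). 1 \<in> F}. monom (1::int) (n - card F))
       = R_Gamma (n - 1)"
proof -
  let ?T = "filters (n - 1) (Z_cover (n - 1))"
  have "(\<Sum>G\<in>?T. monom (1::int) (n - 1 - card G))
      = (\<Sum>F\<in>{F\<in>filters n (Xi_cover n). 1 \<in> F}. monom (1::int) (n - card F))"
  proof (rule sum.reindex_bij_witness[where j = "\<lambda>G. insert 1 ((+) 1 ` G)" and i = "\<lambda>F. (\<lambda>y. y - 1) ` (F - {1})"])
    fix F assume F: "F \<in> {F\<in>filters n (Xi_cover n). 1 \<in> F}"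
    then have sub: "F \<subseteq> {1..n}" and c: "cl (Xi_cover n) F" and "1 \<in> F"
      by (auto simp: filters_cl)
    have sub1: "F - {1} \<subseteq> {1<..}" using sub by auto
    have memi: "x \<in> (\<lambda>y. y - 1) ` (F - {1}) \<longleftrightarrow> x \<ge> 1 \<and> x + 1 \<in> F" for x
      unfolding mem_unshift[OF sub1] by auto
    show "insert 1 ((+) 1 ` (\<lambda>y. y - 1) ` (F - {1})) = F"
    proof (rule set_eqI)
      fix x show "x \<in> insert 1 ((+) 1 ` (\<lambda>y. y - 1) ` (F - {1})) \<longleftrightarrow> x \<in> F"
      proof -
        have "x \<in> F \<Longrightarrow> x \<noteq> 1 \<Longrightarrow> x \<ge> 2" using sub by force
        then show ?thesis
          unfolding insert_iff mem_shift memi using \<open>1 \<in> F\<close> by auto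
      qed
    qed
    show "(\<lambda>y. y - 1) ` (F - {1}) \<in> ?T"
      unfolding filters_cl mem_Collect_eq
    proof
      show "(\<lambda>y. y - 1) ` (F - {1}) \<subseteq> {1..n - 1}"
      proof
        fix x assume "x \<in> (\<lambda>y. y - 1) ` (F - {1})"
        then have "x \<ge> 1" "x + 1 \<in> F" using memi by auto
        with sub have "x + 1 \<le> n" by auto
        with \<open>x \<ge> 1\<close> show "x \<in> {1..n - 1}" by auto
      qed
      show "cl (Z_cover (n - 1)) ((\<lambda>y. y - 1) ` (F - {1}))"
      proof (rule ZI, unfold memi)
        fix i assume i: "1 \<le> i" "i + 1 \<le> n - 1" "odd i" "1 \<le> i + 1 \<and> i + 1 + 1 \<in> F"
        show "1 \<le> i \<and> i + 1 \<in> F"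
        proof (cases "i = 1")
          case True
          have "(3::nat) = 1 + 1 + 1" "(2::nat) = 1 + 1" by simp_all
          then show ?thesis using XiE_3[OF c n] i True by metis
        next
          case False
          with i have "i \<ge> 3" by (metis One_nat_def Suc_1 Suc_leI dvd_refl le_antisym le_neq_implies_less numeral_3_eq_3 le_Suc_eq)
          then show ?thesis using XiE_even[OF c, of "i + 1"] i by auto
        qed
      next
        fix i assume i: "1 \<le> i" "i + 1 \<le> n - 1" "even i" "1 \<le> i \<and> i + 1 \<in> F"
        have "i \<ge> 2" using i by (metis One_nat_def Suc_1 Suc_leI le_neq_implies_less odd_one)
        then show "1 \<le> i + 1 \<and> i + 1 + 1 \<in> F"
          using XiE_odd[OF c, of "i + 1"] i by auto
      qed
    qed
  next
    fix G assume G: "G \<in> ?T"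
    then have sub: "G \<subseteq> {1..n-1}" and c: "cl (Z_cover (n-1)) G" by (auto simp: filters_cl)
    have memj: "x \<in> insert 1 ((+) 1 ` G) \<longleftrightarrow> x = 1 \<or> (x \<ge> 2 \<and> x - 1 \<in> G)" for x
      unfolding insert_iff mem_shift using sub by force
    show "(\<lambda>y. y - 1) ` (insert 1 ((+) 1 ` G) - {1}) = G"
    proof -
      have "insert 1 ((+) 1 ` G) - {1} = (+) 1 ` G" using sub by force
      then show ?thesis by (auto simp: image_image)
    qed
    show "insert 1 ((+) 1 ` G) \<in> {F\<in>filters n (Xi_cover n). 1 \<in> F}"
      unfolding filters_cl mem_Collect_eq
    proof (intro conjI)
      show "insert 1 ((+) 1 ` G) \<subseteq> {1..n}" using sub n by (force simp: subset_iff)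
      show "1 \<in> insert 1 ((+) 1 ` G)" by auto
      show "cl (Xi_cover n) (insert 1 ((+) 1 ` G))"
      proof (rule XiI, unfold memj)
        assume "(3::nat) = 1 \<or> 2 \<le> (3::nat) \<and> 3 - 1 \<in> G"
        then have "2 \<in> G" by auto
        then have "1 \<in> G" using ZE_odd[OF c, of 1] n by (simp add: numeral_2_eq_2)
        then show "(2::nat) = 1 \<or> 2 \<le> (2::nat) \<and> 2 - 1 \<in> G" by auto
      next
        fix i assume i: "3 \<le> i" "i + 1 \<le> n" "odd i" "i = 1 \<or> 2 \<le> i \<and> i - 1 \<in> G"
        then have "i - 1 \<in> G" "even (i - 1)" by auto
        then have "i \<in> G" using ZE_even[OF c, of "i - 1"] i by auto
        then show "i + 1 = 1 \<or> 2 \<le> i + 1 \<and> i + 1 - 1 \<in> G" using i by auto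
      next
        fix i assume i: "3 \<le> i" "i + 1 \<le> n" "even i" "i + 1 = 1 \<or> 2 \<le> i + 1 \<and> i + 1 - 1 \<in> G"
        then have "i \<in> G" "odd (i - 1)" by auto
        then have "i - 1 \<in> G" using ZE_odd[OF c, of "i - 1"] i by auto
        then show "i = 1 \<or> 2 \<le> i \<and> i - 1 \<in> G" using i by auto
      qed auto
    qed
    have fin: "finite G" using sub finite_subset by blast
    have "1 \<notin> (+) 1 ` G" using sub by auto
    then have "card (insert 1 ((+) 1 ` G)) = Suc (card G)"
      using fin card_shift[of 1 G] by simp
    then show "monom 1 (n - card (insert 1 ((+) 1 ` G))) = monom (1::int) (n - 1 - card G)"
      by simp
  qed
  then show ?thesis
    by (simp add: R_Gamma_def rank_gen_def)
qed

theorem mainTheorem1: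
  fixes n :: nat
  assumes "n \<ge> 3"
  shows "R_Omega n = R_Gamma (n - 1) + monom 1 3 * R_Gamma (n - 3)"
proof -
  let ?S = "filters n (Xi_cover n)"
  have "?S = {F\<in>?S. 1 \<in> F} \<union> {F\<in>?S. 1 \<notin> F}" by auto
  then have "R_Omega n = (\<Sum>F\<in>{F\<in>?S. 1 \<in> F}. monom (1::int) (n - card F))
      + (\<Sum>F\<in>{F\<in>?S. 1 \<notin> F}. monom (1::int) (n - card F))"
    unfolding R_Omega_def rank_gen_def
    by (metis (no_types, lifting) finite_filters sum.union_disjoint finite_Un disjoint_iff mem_Collect_eq)
  then show ?thesis using partA[OF assms] partB[OF assms] by simp
qed

end
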